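(* Let $\theta>1$, $r\in(\theta^{-1},\theta^{-1/2}]$ and $\beta=\frac{1-r^2\theta}{r\theta}\max\big(\frac1{1-r},\frac1{r\theta-1}\big)$. Let $(P_1,\dots,P_n)$ be a random price sequence with values in $[1,\theta]$ and maximum $P^*$, and $Y$ a random prediction with values in $[1,\theta]$ (arbitrary joint law). Then \[ \frac{\mathbb{E}[\mathsf{A}^1_r(P,Y)]}{\mathbb{E}[P^*]}\ \ge\ \max\Big\{r,\ \frac1{r\theta}-\beta\,\frac{\mathbb{E}\big[P^*\,|P^*-Y|\big]}{\mathbb{E}[P^*]}\Big\}. \]
   Context: One-max search: fix $\theta>1$. Prices $p_1,\dots,p_n\in[1,\theta]$ are revealed one at a time; the algorithm receives at the start a prediction $y\in[1,\theta]$ of the maximum price. At each step it irrevocably accepts the current price (payoff = that price) or rejects it; if nothing is accepted the payoff is $1$. Let $\varphi_r(z)=\frac{r\theta-1}{1-r}+\frac{1-r^2\theta}{1-r}\cdot\frac{z}{r\theta}$ and $\Phi^1_r(z)=\max(r\theta,\varphi_r(z))$; $\mathsf{A}^1_r$ accepts the first price $p_i\ge\Phi^1_r(y)$, and $\mathsf{A}^1_r(P,Y)$ is its payoff on the realized prices and prediction. *)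

theory Defs
  imports "HOL-Probability.Probability"
begin

definition varphi :: "real \<Rightarrow> real \<Rightarrow> real \<Rightarrow> real" where
  "varphi \<theta> r z = (r*\<theta> - 1)/(1 - r) + (1 - r^2*\<theta>)/(1 - r) * (z/(r*\<theta>))"

definition Phi1 :: "real \<Rightarrow> real \<Rightarrow> real \<Rightarrow> real" where
  "Phi1 \<theta> r z = max (r*\<theta>) (varphi \<theta> r z)"

fun accept_first :: "real \<Rightarrow> real list \<Rightarrow> real" where
  "accept_first t [] = 1"
| "accept_first t (p # ps) = (if t \<le> p then p else accept_first t ps)"

definition A1 :: "real \<Rightarrow> real \<Rightarrow> real list \<Rightarrow> real \<Rightarrow> real" where
  "A1 \<theta> r ps y = accept_first (Phi1 \<theta> r y) ps"

end

theory Submission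
  imports Defs
begin

lemma phi_props:
  fixes \<theta> r y :: real
  assumes th: "\<theta> > 1" and r1: "1/\<theta> < r" and q: "r^2*\<theta> \<le> 1"
  defines "k \<equiv> (1 - r^2*\<theta>)/((1-r)*(r*\<theta>))"
  shows "varphi \<theta> r y = r*\<theta> + k*(y - r*\<theta>)" and "0 \<le> k" and "k < 1"
    and "r < 1" and "r*\<theta> > 1"
proof -
  have s: "r*\<theta> > 1" using r1 th by (simp add: field_simps)
  have r0: "r > 0" using r1 th by (smt (verit) divide_pos_pos)
  have "r*r*\<theta> \<le> 1" using q by (simp add: power2_eq_square)
  hence rl: "r < 1" using s by (smt (verit) mult_le_cancel_right1 r0 mult.assoc mult_less_cancel_left_pos)
  show "r < 1" "r*\<theta> > 1" using rl s by auto
  show "varphi \<theta> r y = r*\<theta> + k*(y - r*\<theta>)" proof -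
    have a: "1 - r \<noteq> 0" "r*\<theta> \<noteq> 0" using rl s by auto
    show ?thesis unfolding varphi_def k_def using a by (simp add: divide_simps) (simp add: algebra_simps power2_eq_square)
  qed
  show "0 \<le> k" unfolding k_def using rl s q by simp
  have "1 - r^2*\<theta> < (1-r)*(r*\<theta>)" using s rl by (simp add: algebra_simps power2_eq_square)
  then show "k < 1" unfolding k_def using rl s by simp
qed

lemma pw:
  fixes \<theta> r y p a \<beta> :: real
  assumes th: "\<theta> > 1" and r1: "1/\<theta> < r" and q: "r^2*\<theta> \<le> 1"
    and bet: "\<beta> = (1 - r^2*\<theta>)/(r*\<theta>) * max (1/(1 - r)) (1/(r*\<theta> - 1))"
    and p: "1 \<le> p" "p \<le> \<theta>" and y: "1 \<le> y" "y \<le> \<theta>"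
    and ha: "Phi1 \<theta> r y \<le> p \<Longrightarrow> Phi1 \<theta> r y \<le> a"
    and hb: "\<not> Phi1 \<theta> r y \<le> p \<Longrightarrow> a = 1"
  shows "r*p \<le> a" "p/(r*\<theta>) - \<beta>*(p*\<bar>p-y\<bar>) \<le> a"
proof -
  define k where "k = (1 - r^2*\<theta>)/((1-r)*(r*\<theta>))"
  define t where "t = Phi1 \<theta> r y"
  note ph = phi_props[OF th r1 q, folded k_def]
  have rl: "r < 1" and s: "r*\<theta> > 1" and k0: "0 \<le> k" and k1: "k < 1" using ph by auto
  have "0 < 1/\<theta>" using th by simp
  then have r0: "r > 0" using r1 by linarith
  have phi: "\<And>z. varphi \<theta> r z = r*\<theta> + k*(z - r*\<theta>)" using phi_props[OF th r1 q] k_def by simp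
  have c0: "0 \<le> (1 - r^2*\<theta>)/(r*\<theta>)" using q s by simp
  have b1: "\<beta> = max k (k*(1-r)/(r*\<theta>-1))"
  proof -
    have "\<beta> = max ((1 - r^2*\<theta>)/(r*\<theta>) * (1/(1 - r))) ((1 - r^2*\<theta>)/(r*\<theta>) * (1/(r*\<theta> - 1)))"
      unfolding bet max_mult_distrib_left using c0 by simp
    moreover have "(1 - r^2*\<theta>)/(r*\<theta>) * (1/(1 - r)) = k" unfolding k_def by simp
    moreover have "(1 - r^2*\<theta>)/(r*\<theta>) * (1/(r*\<theta> - 1)) = k*(1-r)/(r*\<theta>-1)"
      unfolding k_def using rl by simp
    ultimately show ?thesis by simp
  qed
  define b2 where "b2 = k*(1-r)/(r*\<theta>-1)"
  have k1e: "1 - k = (r*\<theta>-1)/((1-r)*(r*\<theta>))"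
  proof -
    have a: "(1-r)*(r*\<theta>) \<noteq> 0" using rl s by auto
    have "1 - k = ((1-r)*(r*\<theta>) - (1 - r^2*\<theta>))/((1-r)*(r*\<theta>))"
      unfolding k_def using a by (simp add: diff_divide_distrib)
    also have "(1-r)*(r*\<theta>) - (1 - r^2*\<theta>) = r*\<theta>-1" by (simp add: algebra_simps power2_eq_square)
    finally show ?thesis .
  qed
  have b2: "b2 * (1-k) = k/(r*\<theta>)" unfolding b2_def k1e using rl s by simp
  have kr: "k*(r*\<theta>) \<le> 1" unfolding k_def using rl s q r0 th
    by (simp add: field_simps power2_eq_square)
  have phth: "r*\<theta> + k*(\<theta> - r*\<theta>) = 1/r" unfolding k_def using rl s r0 th
    by (simp add: field_simps power2_eq_square)
  have t1: "r*\<theta> \<le> t" unfolding t_def Phi1_def by simp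
  have t2: "t \<le> 1/r" unfolding t_def Phi1_def phi
  proof (rule max.boundedI)
    have "r*\<theta> \<le> 1/r" using q r0 by (simp add: field_simps power2_eq_square)
    then show "r*\<theta> \<le> 1/r" .
    have "k*(y - r*\<theta>) \<le> k*(\<theta> - r*\<theta>)" using k0 y by (simp add: mult_left_mono)
    then show "r*\<theta> + k*(y - r*\<theta>) \<le> 1/r" using phth by linarith
  qed
  have G: "p/(r*\<theta>) - (r*\<theta> + k*(z - r*\<theta>)) \<le> k*\<bar>p-z\<bar>" if z: "z \<le> \<theta>" for z
  proof -
    have id: "p/(r*\<theta>) - (r*\<theta> + k*(z - r*\<theta>)) = (p-z)/(r*\<theta>) + (k - 1/(r*\<theta>))*(\<theta>-z)"
    proof -
      have e1: "\<theta>/(r*\<theta>) = 1/r" using th by simp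
      have e2: "r*\<theta> + k*\<theta> - k*(r*\<theta>) = 1/r" using phth by (simp add: algebra_simps)
      have e3: "(p-z)/(r*\<theta>) + (k - 1/(r*\<theta>))*(\<theta>-z) = p/(r*\<theta>) + k*\<theta> - k*z - \<theta>/(r*\<theta>)"
        by (simp add: algebra_simps diff_divide_distrib)
      show ?thesis using e1 e2 e3 by (simp add: algebra_simps)
    qed
    have kk: "k - 1/(r*\<theta>) \<le> 0" using kr s by (simp add: field_simps)
    show ?thesis
    proof (cases "p \<le> z")
      case True
      have "(p-z)/(r*\<theta>) \<le> 0" using True s by (simp add: divide_nonpos_pos)
      moreover have "(k - 1/(r*\<theta>))*(\<theta>-z) \<le> 0" using kk z by (simp add: mult_nonpos_nonneg)
      ultimately show ?thesis using id k0 by (smt (verit) abs_ge_zero mult_nonneg_nonneg)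
    next
      case False
      have "(k - 1/(r*\<theta>))*(\<theta>-z) \<le> (k - 1/(r*\<theta>))*(p-z)" using kk p False
        by (simp add: mult_left_mono_neg)
      then have "p/(r*\<theta>) - (r*\<theta> + k*(z - r*\<theta>)) \<le> (p-z)/(r*\<theta>) + (k - 1/(r*\<theta>))*(p-z)"
        unfolding id by (rule add_left_mono)
      also have "\<dots> = k*(p-z)" using s by (simp add: field_simps)
      finally show ?thesis using False by simp
    qed
  qed
  have bk: "k \<le> \<beta>" "b2 \<le> \<beta>" using b1 b2_def by auto
  have main: "p/(r*\<theta>) - \<beta>*\<bar>p-y\<bar> \<le> a \<and> r*p \<le> a"
  proof (cases "t \<le> p")
    case True
    then have at: "t \<le> a" using ha t_def by simp
    have "p/(r*\<theta>) - t \<le> k*\<bar>p-y\<bar>"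
    proof (cases "r*\<theta> \<le> y")
      case True
      then have "t = r*\<theta> + k*(y - r*\<theta>)" unfolding t_def Phi1_def phi using k0
        by (simp add: max_def)
      then show ?thesis using G[OF y(2)] by simp
    next
      case False
      have "k*(y-r*\<theta>) \<le> 0" using False k0 by (simp add: mult_nonneg_nonpos)
      then have tt: "t = r*\<theta>" unfolding t_def Phi1_def phi by (simp add: max_def)
      have "p/(r*\<theta>) - t \<le> k*\<bar>p - r*\<theta>\<bar>" 
      proof -
        have "r*\<theta> \<le> \<theta>" using rl th by simp
        from G[OF this] show ?thesis using tt by simp
      qed
      also have "\<dots> \<le> k*\<bar>p-y\<bar>" using k0 True tt False by (intro mult_left_mono) auto
      finally show ?thesis .
    qed
    moreover have "k*\<bar>p-y\<bar> \<le> \<beta>*\<bar>p-y\<bar>" using bk by (simp add: mult_right_mono)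
    moreover have "r*p \<le> r*\<theta>" using p r0 by simp
    ultimately show ?thesis using at t1 by linarith
  next
    case False
    then have a1: "a = 1" using hb t_def by simp
    have rp: "r*p \<le> 1"
    proof -
      have "r*p \<le> r*t" using False r0 by simp
      moreover have "r*t \<le> 1" using t2 r0 by (simp add: field_simps)
      ultimately show ?thesis by linarith
    qed
    have "p/(r*\<theta>) - \<beta>*\<bar>p-y\<bar> \<le> 1"
    proof (cases "p \<le> r*\<theta>")
      case True
      then have "p/(r*\<theta>) \<le> 1" using s by simp
      moreover have "0 \<le> \<beta>*\<bar>p-y\<bar>" using bk k0 by simp
      ultimately show ?thesis by linarith
    next
      case pg: False
      have tp: "t = r*\<theta> + k*(y - r*\<theta>)" and tg: "r*\<theta> < t"
        using False pg unfolding t_def Phi1_def phi by (auto simp: max_def split: if_splits)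
      have yg: "y > r*\<theta>" using tp tg k0 by (smt (verit) mult_nonneg_nonpos)
      have pk: "p - r*\<theta> < k*(y - r*\<theta>)" using False tp by simp
      have ypk: "y - p > (1-k)*(y - r*\<theta>)" using pk by (simp add: algebra_simps)
      then have m: "b2*((1-k)*(y - r*\<theta>)) \<le> b2*(y-p)"
        using b2_def k0 rl s by (intro mult_left_mono) auto
      have "(p - r*\<theta>)/(r*\<theta>) < k*(y - r*\<theta>)/(r*\<theta>)" using pk s by (simp add: divide_strict_right_mono)
      also have "\<dots> = b2*((1-k)*(y - r*\<theta>))" using b2
        by (metis mult.assoc times_divide_eq_left)
      also have "\<dots> \<le> b2*(y-p)" by (rule m)
      finally have "(p - r*\<theta>)/(r*\<theta>) < b2*(y-p)" .
      moreover have "b2*(y-p) \<le> \<beta>*\<bar>p-y\<bar>" 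
      proof -
        have "0 \<le> (1-k)*(y - r*\<theta>)" using k1 yg by simp
        then have "p \<le> y" using ypk by linarith
        then have "\<bar>p-y\<bar> = y - p" by simp
        moreover have "b2*(y-p) \<le> \<beta>*(y-p)" using bk \<open>p \<le> y\<close> by (intro mult_right_mono) auto
        ultimately show ?thesis by simp
      qed
      moreover have "(p - r*\<theta>)/(r*\<theta>) = p/(r*\<theta>) - 1" using r0 th by (simp add: diff_divide_distrib)
      ultimately show ?thesis by linarith
    qed
    then show ?thesis using a1 rp by simp
  qed
  then show "r*p \<le> a" by simp
  have "\<beta>*\<bar>p-y\<bar> \<le> \<beta>*(p*\<bar>p-y\<bar>)" using bk k0 p
    by (intro mult_left_mono) (auto simp: mult_le_cancel_right1)
  then show "p/(r*\<theta>) - \<beta>*(p*\<bar>p-y\<bar>) \<le> a" using main by linarith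
qed


lemma af_pos: "(\<exists>x\<in>set ps. t \<le> x) \<Longrightarrow> t \<le> accept_first t ps \<and> accept_first t ps \<in> set ps"
  by (induction ps) auto

lemma af_neg: "\<not>(\<exists>x\<in>set ps. t \<le> x) \<Longrightarrow> accept_first t ps = 1"
  by (induction ps) auto

lemma af_meas:
  assumes t: "t \<in> borel_measurable M"
    and P: "\<forall>i\<in>set xs. (\<lambda>\<omega>. P \<omega> i) \<in> borel_measurable M"
  shows "(\<lambda>\<omega>. accept_first (t \<omega>) (map (P \<omega>) xs)) \<in> borel_measurable M"
  using P
proof (induction xs)
  case Nil
  then show ?case by simp
next
  case (Cons i xs)
  then have ih[measurable]: "(\<lambda>\<omega>. accept_first (t \<omega>) (map (P \<omega>) xs)) \<in> borel_measurable M"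
    and pi[measurable]: "(\<lambda>\<omega>. P \<omega> i) \<in> borel_measurable M" by auto
  note t[measurable]
  show ?case by simp measurable
qed

theorem corollary8:
  fixes M :: "'a measure" and P :: "'a \<Rightarrow> nat \<Rightarrow> real" and Y :: "'a \<Rightarrow> real"
    and n :: nat and \<theta> r \<beta> :: real
  assumes "prob_space M"
    and "\<theta> > 1"
    and "1 / \<theta> < r" and "r \<le> 1 / sqrt \<theta>"
    and "\<beta> = (1 - r^2*\<theta>)/(r*\<theta>) * max (1/(1 - r)) (1/(r*\<theta> - 1))"
    and "n \<ge> 1"
    and "\<And>i. i < n \<Longrightarrow> (\<lambda>\<omega>. P \<omega> i) \<in> borel_measurable M"
    and "Y \<in> borel_measurable M"
    and "\<And>\<omega> i. \<omega> \<in> space M \<Longrightarrow> i < n \<Longrightarrow> P \<omega> i \<in> {1..\<theta>}"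
    and "\<And>\<omega>. \<omega> \<in> space M \<Longrightarrow> Y \<omega> \<in> {1..\<theta>}"
  shows "(let Pstar = (\<lambda>\<omega>. Max ((P \<omega>) ` {..<n}));
              EA = (\<integral>\<omega>. A1 \<theta> r (map (P \<omega>) [0..<n]) (Y \<omega>) \<partial>M);
              EP = (\<integral>\<omega>. Pstar \<omega> \<partial>M)
          in EA / EP \<ge> max r (1/(r*\<theta>) - \<beta> * (\<integral>\<omega>. Pstar \<omega> * \<bar>Pstar \<omega> - Y \<omega>\<bar> \<partial>M) / EP))"
proof -
  interpret prob_space M by fact
  note th = assms(2) and r1 = assms(3)
  have r0: "r > 0" using r1 th by (smt (verit) divide_pos_pos)
  have q: "r^2*\<theta> \<le> 1"
  proof -
    have sq: "sqrt \<theta> > 0" using th by simp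
    have "r * sqrt \<theta> \<le> 1" using assms(4) sq by (simp add: le_divide_eq)
    moreover have "0 \<le> r * sqrt \<theta>" using r0 th by simp
    ultimately have "(r * sqrt \<theta>)^2 \<le> 1" by (rule power_le_one[rotated])
    then show ?thesis using th by (simp add: power_mult_distrib)
  qed
  define Ps where "Ps = (\<lambda>\<omega>. Max ((P \<omega>) ` {..<n}))"
  define A where "A = (\<lambda>\<omega>. A1 \<theta> r (map (P \<omega>) [0..<n]) (Y \<omega>))"
  define E where "E = (\<integral>\<omega>. Ps \<omega> * \<bar>Ps \<omega> - Y \<omega>\<bar> \<partial>M)"
  have ne: "{..<n} \<noteq> {}" using assms(6) by (simp add: lessThan_empty_iff)
  have Psr: "Ps \<omega> \<in> {1..\<theta>}" if w: "\<omega> \<in> space M" for \<omega>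
  proof -
    have "P \<omega> 0 \<le> Ps \<omega>" unfolding Ps_def using assms(6) by (intro Max_ge) auto
    moreover have "P \<omega> 0 \<ge> 1" using assms(9)[OF w, of 0] assms(6) by auto
    moreover have "Ps \<omega> \<le> \<theta>" unfolding Ps_def using ne assms(9)[OF w] by (subst Max_le_iff) auto
    ultimately show ?thesis by auto
  qed
  have Ar: "A \<omega> \<le> \<theta> \<and> r * Ps \<omega> \<le> A \<omega> \<and> Ps \<omega>/(r*\<theta>) - \<beta>*(Ps \<omega>*\<bar>Ps \<omega> - Y \<omega>\<bar>) \<le> A \<omega>"
    if w: "\<omega> \<in> space M" for \<omega>
  proof -
    define ps where "ps = map (P \<omega>) [0..<n]"
    define t where "t = Phi1 \<theta> r (Y \<omega>)"
    have sp: "set ps = P \<omega> ` {..<n}" unfolding ps_def by auto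
    have iff: "t \<le> Ps \<omega> \<longleftrightarrow> (\<exists>x\<in>set ps. t \<le> x)" unfolding Ps_def sp
      using ne by (subst Max_ge_iff) auto
    have Aeq: "A \<omega> = accept_first t ps" unfolding A_def A1_def ps_def t_def by simp
    have ha: "t \<le> A \<omega>" if "t \<le> Ps \<omega>" using af_pos iff that Aeq by auto
    have hb: "A \<omega> = 1" if "\<not> t \<le> Ps \<omega>" using af_neg iff that Aeq by auto
    have "A \<omega> \<le> \<theta>"
    proof (cases "t \<le> Ps \<omega>")
      case True
      then have "A \<omega> \<in> set ps" using af_pos iff Aeq by auto
      then show ?thesis using sp assms(9)[OF w] by auto
    next
      case False
      then show ?thesis using hb th by simp
    qed
    moreover note pw[OF th r1 q assms(5), of "Ps \<omega>" "Y \<omega>" "A \<omega>"]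
    ultimately show ?thesis using Psr[OF w] assms(10)[OF w] ha hb t_def by auto
  qed
  have mP[measurable]: "\<And>i. i \<in> {..<n} \<Longrightarrow> (\<lambda>\<omega>. P \<omega> i) \<in> borel_measurable M" using assms(7) by auto
  have mY[measurable]: "Y \<in> borel_measurable M" by fact
  have mPs[measurable]: "Ps \<in> borel_measurable M" unfolding Ps_def
    by (rule borel_measurable_Max) (auto intro: mP)
  have mT: "(\<lambda>\<omega>. Phi1 \<theta> r (Y \<omega>)) \<in> borel_measurable M" unfolding Phi1_def varphi_def by measurable
  have mA[measurable]: "A \<in> borel_measurable M" unfolding A_def A1_def
    by (rule af_meas[OF mT]) (auto intro: assms(7))
  have iPs: "integrable M Ps"
    by (rule integrable_const_bound[where B=\<theta>]) (auto intro!: AE_I2 dest: Psr)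
  have iA: "integrable M A"
  proof (rule integrable_const_bound[where B=\<theta>])
    show "AE x in M. norm (A x) \<le> \<theta>"
    proof (rule AE_I2)
      fix x assume x: "x \<in> space M"
      have "0 \<le> r * Ps x" using Psr[OF x] r0 by simp
      then show "norm (A x) \<le> \<theta>" using Ar[OF x] by auto
    qed
  qed simp
  have iE: "integrable M (\<lambda>\<omega>. Ps \<omega> * \<bar>Ps \<omega> - Y \<omega>\<bar>)"
  proof (rule integrable_const_bound[where B="\<theta>*\<theta>"])
    show "AE x in M. norm (Ps x * \<bar>Ps x - Y x\<bar>) \<le> \<theta>*\<theta>"
    proof (rule AE_I2)
      fix x assume x: "x \<in> space M"
      have a: "\<bar>Ps x - Y x\<bar> \<le> \<theta>" using Psr[OF x] assms(10)[OF x] by auto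
      have "norm (Ps x * \<bar>Ps x - Y x\<bar>) = Ps x * \<bar>Ps x - Y x\<bar>" using Psr[OF x] by simp
      also have "\<dots> \<le> \<theta> * \<theta>" using Psr[OF x] a by (intro mult_mono) auto
      finally show "norm (Ps x * \<bar>Ps x - Y x\<bar>) \<le> \<theta>*\<theta>" .
    qed
  qed simp
  define EP where "EP = integral\<^sup>L M Ps"
  define EA where "EA = integral\<^sup>L M A"
  have EP1: "1 \<le> EP"
  proof -
    have "(\<integral>\<omega>. 1 \<partial>M) \<le> EP" unfolding EP_def
      by (rule integral_mono[OF _ iPs]) (auto dest: Psr)
    then show ?thesis by (simp add: prob_space)
  qed
  have c1: "r * EP \<le> EA"
  proof -
    have "(\<integral>\<omega>. r * Ps \<omega> \<partial>M) \<le> EA" unfolding EA_def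
      by (rule integral_mono[OF _ iA]) (auto dest: Ar intro: iPs)
    then show ?thesis unfolding EP_def by simp
  qed
  have c2: "EP/(r*\<theta>) - \<beta>*E \<le> EA"
  proof -
    have "(\<integral>\<omega>. Ps \<omega>/(r*\<theta>) - \<beta>*(Ps \<omega>*\<bar>Ps \<omega> - Y \<omega>\<bar>) \<partial>M) \<le> EA" unfolding EA_def
      by (rule integral_mono[OF _ iA]) (auto dest: Ar intro!: Bochner_Integration.integrable_diff integrable_divide iPs integrable_mult_right iE)
    moreover have "(\<integral>\<omega>. Ps \<omega>/(r*\<theta>) - \<beta>*(Ps \<omega>*\<bar>Ps \<omega> - Y \<omega>\<bar>) \<partial>M) = EP/(r*\<theta>) - \<beta>*E"
      unfolding EP_def E_def using iPs iE by (simp add: Bochner_Integration.integral_diff)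
    ultimately show ?thesis by simp
  qed
  have g1: "r \<le> EA/EP" using c1 EP1 by (simp add: pos_le_divide_eq)
  have g2: "1/(r*\<theta>) - \<beta>*E/EP \<le> EA/EP"
  proof -
    have "1/(r*\<theta>) - \<beta>*E/EP = (EP/(r*\<theta>) - \<beta>*E)/EP" using EP1 by (simp add: field_simps)
    also have "\<dots> \<le> EA/EP" using c2 EP1 by (simp add: divide_right_mono)
    finally show ?thesis .
  qed
  show ?thesis using g1 g2 unfolding E_def EP_def EA_def Ps_def A_def by (simp add: Let_def)
qed

end
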